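(* Fix $0<\alpha<1$, $\lambda>1$, $0<r_0<1$ and $0<\mu<1$. There is a constant $C_3>0$ such that the following holds. Let $s(t)=(s_1(t),s_2(t))$ and $\tilde s(t)=(\tilde s_1(t),\tilde s_2(t))$ be solutions of $$\dot s_1=s_1\Bigl(\tfrac{s_1^2+s_2^2}{r_0}\Bigr)^{\alpha}\log\lambda,\qquad \dot s_2=-s_2\Bigl(\tfrac{s_1^2+s_2^2}{r_0}\Bigr)^{\alpha}\log\lambda$$ where $T>0$ is such that $s(t)$ lies in $D_{r_0/2}=\{s_1^2+s_2^2\le r_0^2/4\}$ for all $t\in[0,T]$ while the trajectory is outside $D_{r_0/2}$ at times $-1$ and $T+1$; let $T_1=T/2$ and $\Delta s_j(t)=\tilde s_j(t)-s_j(t)$. Assume $s_1(t)\neq0\neq s_2(t)$, that $\Delta s_2(t)>0$ and $|\Delta s_1(t)|\le\mu\,\Delta s_2(t)$ for $t\in[0,T]$, and that $\bigl|\frac{\Delta s_2(0)}{s_2(0)}\bigr|<\frac{1-\mu}{72}$. Then for all $T_1<t<T$, $$\Delta s_2(t)<C_3\,\Delta s_2(T_1).$$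
   Context: The system is the slow-down vector field in the region where the slow-down function equals $\psi(u)=(u/r_0)^\alpha$; $\lambda$ is the largest eigenvalue of the toral automorphism being slowed down. The constant $C_3$ is uniform over all such pairs of solutions. *)

theory Defs
  imports "HOL-Analysis.Analysis"
begin

definition slow_rate :: "real \<Rightarrow> real \<Rightarrow> real \<Rightarrow> real \<Rightarrow> real \<Rightarrow> real" where
  "slow_rate r0 \<alpha> lam x y = ((x\<^sup>2 + y\<^sup>2) / r0) powr \<alpha> * ln lam"

definition slow_solution ::
  "real \<Rightarrow> real \<Rightarrow> real \<Rightarrow> (real \<Rightarrow> real) \<Rightarrow> (real \<Rightarrow> real) \<Rightarrow> real set \<Rightarrow> bool" where
  "slow_solution r0 \<alpha> lam s1 s2 I \<longleftrightarrow>
     (\<forall>t\<in>I. (s1 has_real_derivative (s1 t * slow_rate r0 \<alpha> lam (s1 t) (s2 t))) (at t within I)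
          \<and> (s2 has_real_derivative (- s2 t * slow_rate r0 \<alpha> lam (s1 t) (s2 t))) (at t within I))"

end

theory Submission
  imports Defs
begin

lemma f_mono_q0:
  fixes c \<alpha> p p' :: real
  assumes "0 < c" "0 < \<alpha>" "p \<le> p'"
  shows "p * ((p\<^sup>2) / c) powr \<alpha> \<le> p' * ((p'\<^sup>2) / c) powr \<alpha>"
proof (cases "0 \<le> p")
  case True
  have "p\<^sup>2 \<le> p'\<^sup>2" using True assms by (intro power_mono) auto
  hence "p\<^sup>2 / c \<le> p'\<^sup>2 / c" using assms(1) by (rule divide_right_mono[OF _ less_imp_le])
  hence "(p\<^sup>2 / c) powr \<alpha> \<le> (p'\<^sup>2 / c) powr \<alpha>"
    using assms(1,2) by (intro powr_mono2) auto
  thus ?thesis using True assms(3) by (intro mult_mono) auto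
next
  case False
  show ?thesis
  proof (cases "0 \<le> p'")
    case True
    have "p * ((p\<^sup>2) / c) powr \<alpha> \<le> 0" using False by (intro mult_nonpos_nonneg) auto
    also have "0 \<le> p' * ((p'\<^sup>2) / c) powr \<alpha>" using True by (intro mult_nonneg_nonneg) auto
    finally show ?thesis .
  next
    case F2: False
    have "(-p')\<^sup>2 \<le> (-p)\<^sup>2" using F2 False assms by (intro power_mono) auto
    hence "p'\<^sup>2 \<le> p\<^sup>2" by simp
    hence "p'\<^sup>2 / c \<le> p\<^sup>2 / c" using assms(1) by (rule divide_right_mono[OF _ less_imp_le])
    hence A: "(p'\<^sup>2 / c) powr \<alpha> \<le> (p\<^sup>2 / c) powr \<alpha>"
      using assms(1,2) by (intro powr_mono2) auto
    have "p * ((p\<^sup>2) / c) powr \<alpha> \<le> p * ((p'\<^sup>2) / c) powr \<alpha>"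
      using A False by (intro mult_left_mono_neg) auto
    also have "\<dots> \<le> p' * ((p'\<^sup>2) / c) powr \<alpha>"
      using assms(3) by (intro mult_right_mono) auto
    finally show ?thesis .
  qed
qed

lemma alg_id: "(0::real) < c \<Longrightarrow> (1 + 0) * (v * w) + (\<alpha> * w * (2 * x / c)) * (x + q) = w / c * (c * v + 2 * \<alpha> * x * (x + q))"
  by (simp add: field_simps)

lemma f_mono:
  fixes c \<alpha> p p' q :: real
  assumes "0 < c" "0 < \<alpha>" "\<alpha> < 1" "p \<le> p'"
  shows "(p + q) * ((p\<^sup>2 + q\<^sup>2) / c) powr \<alpha> \<le> (p' + q) * ((p'\<^sup>2 + q\<^sup>2) / c) powr \<alpha>"
proof (cases "q = 0")
  case True
  thus ?thesis using f_mono_q0[OF assms(1,2,4)] by simp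
next
  case False
  let ?f = "\<lambda>p. (p + q) * ((p\<^sup>2 + q\<^sup>2) / c) powr \<alpha>"
  show ?thesis
  proof (rule DERIV_nonneg_imp_nondecreasing[OF assms(4), of ?f])
    fix x assume "p \<le> x" "x \<le> p'"
    define v where "v = (x\<^sup>2 + q\<^sup>2) / c"
    have qpos: "q\<^sup>2 > 0" using False by simp
    have vpos: "v > 0" unfolding v_def using qpos assms(1)
      by (intro divide_pos_pos) (auto intro: add_nonneg_pos)
    have d1: "DERIV (\<lambda>x. (x\<^sup>2 + q\<^sup>2) / c) x :> 2 * x / c"
      using assms(1) by (auto intro!: derivative_eq_intros)
    have d2: "DERIV (\<lambda>x. ((x\<^sup>2 + q\<^sup>2) / c) powr \<alpha>) x :> \<alpha> * v powr (\<alpha> - of_nat 1) * (2 * x / c)"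
      using DERIV_fun_powr[OF d1 vpos[unfolded v_def], of \<alpha>] unfolding v_def by simp
    have d3: "DERIV ?f x :> (1 + 0) * ((x\<^sup>2 + q\<^sup>2) / c) powr \<alpha> + (\<alpha> * v powr (\<alpha> - of_nat 1) * (2 * x / c)) * (x + q)"
      by (rule DERIV_mult[OF DERIV_add[OF DERIV_ident DERIV_const[of q]] d2])
    define w where "w = v powr (\<alpha> - 1)"
    have eq: "v powr \<alpha> = v * w"
      using vpos unfolding w_def by (simp add: powr_diff)
    have wpos: "w > 0" unfolding w_def using vpos by simp
    have key: "0 \<le> (x\<^sup>2 + q\<^sup>2) + 2 * \<alpha> * x * (x + q)"
    proof -
      have sq: "(x + q)\<^sup>2 = x\<^sup>2 + 2 * x * q + q\<^sup>2" by (simp add: power2_eq_square algebra_simps)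
      have "0 \<le> (x + q)\<^sup>2" by (rule zero_le_power2)
      hence h1: "2 * x * q \<ge> - (x\<^sup>2 + q\<^sup>2)" unfolding sq by linarith
      have h2: "\<alpha> * (2 * x * q) \<ge> \<alpha> * (- (x\<^sup>2 + q\<^sup>2))"
        using h1 assms(2) by (intro mult_left_mono) auto
      have h3: "\<alpha> * (x\<^sup>2 + q\<^sup>2) \<le> (x\<^sup>2 + q\<^sup>2)"
        using assms(2,3) by (intro mult_left_le_one_le) auto
      have h4: "0 \<le> \<alpha> * x\<^sup>2" using assms(2) by simp
      have h5: "2 * \<alpha> * x * (x + q) = 2 * (\<alpha> * x\<^sup>2) + \<alpha> * (2 * x * q)"
        by (simp add: algebra_simps power2_eq_square)
      have h6: "\<alpha> * (- (x\<^sup>2 + q\<^sup>2)) = - (\<alpha> * (x\<^sup>2 + q\<^sup>2))" by (rule mult_minus_right)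
      show ?thesis using h2 h3 h4 h5 h6 by linarith
    qed
    have cv: "c * v = x\<^sup>2 + q\<^sup>2" unfolding v_def using assms(1) by simp
    have ww: "v powr (\<alpha> - of_nat 1) = w" unfolding w_def by simp
    have "(1 + 0) * ((x\<^sup>2 + q\<^sup>2) / c) powr \<alpha> + (\<alpha> * v powr (\<alpha> - of_nat 1) * (2 * x / c)) * (x + q)
        = w / c * (c * v + 2 * \<alpha> * x * (x + q))"
    proof -
      have e1: "((x\<^sup>2 + q\<^sup>2) / c) powr \<alpha> = v * w" using eq unfolding v_def .
      show ?thesis unfolding e1 ww using assms(1) by (rule alg_id)
    qed
    also have "\<dots> = w / c * ((x\<^sup>2 + q\<^sup>2) + 2 * \<alpha> * x * (x + q))" unfolding cv ..
    also have "\<dots> \<ge> 0" using key wpos assms(1) by (intro mult_nonneg_nonneg divide_nonneg_pos) auto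
    finally have "0 \<le> (1 + 0) * ((x\<^sup>2 + q\<^sup>2) / c) powr \<alpha> + (\<alpha> * v powr (\<alpha> - of_nat 1) * (2 * x / c)) * (x + q)" .
    thus "\<exists>y. DERIV ?f x :> y \<and> 0 \<le> y" using d3 by blast
  qed
qed

lemma h_mono:
  fixes r0 \<alpha> x y x' y' :: real
  assumes "0 < r0" "0 < \<alpha>" "\<alpha> < 1" "\<bar>x' - x\<bar> \<le> y' - y"
  shows "y * ((x\<^sup>2 + y\<^sup>2) / r0) powr \<alpha> \<le> y' * ((x'\<^sup>2 + y'\<^sup>2) / r0) powr \<alpha>"
proof -
  define p q p' q' where "p = y + x" "q = y - x" "p' = y' + x'" "q' = y' - x'"
  have c: "0 < 2 * r0" using assms by simp
  have e: "\<And>x y. y * ((x\<^sup>2 + y\<^sup>2) / r0) powr \<alpha> = ((y + x) + (y - x)) * (((y + x)\<^sup>2 + (y - x)\<^sup>2) / (2 * r0)) powr \<alpha> / 2"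
  proof -
    fix x y :: real
    have "((y + x)\<^sup>2 + (y - x)\<^sup>2) / (2 * r0) = (x\<^sup>2 + y\<^sup>2) / r0"
      using assms by (simp add: field_simps power2_eq_square)
    thus "y * ((x\<^sup>2 + y\<^sup>2) / r0) powr \<alpha> = ((y + x) + (y - x)) * (((y + x)\<^sup>2 + (y - x)\<^sup>2) / (2 * r0)) powr \<alpha> / 2"
      by simp
  qed
  have pp: "p \<le> p'" and qq: "q \<le> q'" using assms(4) unfolding p_q_p'_q'_def by auto
  have "(p + q) * ((p\<^sup>2 + q\<^sup>2) / (2*r0)) powr \<alpha> \<le> (p' + q) * ((p'\<^sup>2 + q\<^sup>2) / (2*r0)) powr \<alpha>"
    by (rule f_mono[OF c assms(2,3) pp])
  also have "\<dots> = (q + p') * ((q\<^sup>2 + p'\<^sup>2) / (2*r0)) powr \<alpha>" by (simp add: add.commute)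
  also have "\<dots> \<le> (q' + p') * ((q'\<^sup>2 + p'\<^sup>2) / (2*r0)) powr \<alpha>"
    by (rule f_mono[OF c assms(2,3) qq])
  also have "\<dots> = (p' + q') * ((p'\<^sup>2 + q'\<^sup>2) / (2*r0)) powr \<alpha>" by (simp add: add.commute)
  finally show ?thesis unfolding e p_q_p'_q'_def by simp
qed

lemma aux: "(a::real) \<le> b \<Longrightarrow> 0 < b \<Longrightarrow> a < 2*b" by linarith

theorem lemma6p5:
  fixes \<alpha> lam r0 \<mu> :: real
  assumes "0 < \<alpha>" "\<alpha> < 1" "1 < lam" "0 < r0" "r0 < 1" "0 < \<mu>" "\<mu> < 1"
  shows "\<exists>C3 > 0. \<forall>(T::real) (s1::real\<Rightarrow>real) s2 (t1::real\<Rightarrow>real) t2.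
     T > 0 \<longrightarrow>
     slow_solution r0 \<alpha> lam s1 s2 {-1..T+1} \<longrightarrow>
     slow_solution r0 \<alpha> lam t1 t2 {0..T} \<longrightarrow>
     (\<forall>t\<in>{0..T}. (s1 t)\<^sup>2 + (s2 t)\<^sup>2 \<le> r0\<^sup>2 / 4) \<longrightarrow>
     (s1 (-1))\<^sup>2 + (s2 (-1))\<^sup>2 > r0\<^sup>2 / 4 \<longrightarrow>
     (s1 (T+1))\<^sup>2 + (s2 (T+1))\<^sup>2 > r0\<^sup>2 / 4 \<longrightarrow>
     (\<forall>t\<in>{0..T}. s1 t \<noteq> 0 \<and> s2 t \<noteq> 0) \<longrightarrow>
     (\<forall>t\<in>{0..T}. t2 t - s2 t > 0 \<and> \<bar>t1 t - s1 t\<bar> \<le> \<mu> * (t2 t - s2 t)) \<longrightarrow>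
     \<bar>(t2 0 - s2 0) / s2 0\<bar> < (1 - \<mu>) / 72 \<longrightarrow>
     (\<forall>t. T/2 < t \<and> t < T \<longrightarrow> t2 t - s2 t < C3 * (t2 (T/2) - s2 (T/2)))"
proof (rule exI[of _ 2], intro conjI allI impI)
  fix T :: real and s1 s2 t1 t2 :: "real \<Rightarrow> real" and t
  assume T: "T > 0"
    and S: "slow_solution r0 \<alpha> lam s1 s2 {-1..T+1}"
    and St: "slow_solution r0 \<alpha> lam t1 t2 {0..T}"
    and P: "\<forall>t\<in>{0..T}. t2 t - s2 t > 0 \<and> \<bar>t1 t - s1 t\<bar> \<le> \<mu> * (t2 t - s2 t)"
    and tt: "T/2 < t \<and> t < T"
  have lnpos: "ln lam > 0" using assms by simp
  have D: "\<exists>y. DERIV (\<lambda>t. t2 t - s2 t) x :> y \<and> y \<le> 0" if x: "T/2 \<le> x" "x \<le> t" for x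
  proof -
    have x0: "x \<in> {0..T}" and x1: "x \<in> {-1..T+1}" using x tt T by auto
    have at: "at x within {0..T} = at x" using x tt T by (intro at_within_Icc_at) auto
    have ds: "(s2 has_real_derivative (- s2 x * slow_rate r0 \<alpha> lam (s1 x) (s2 x))) (at x within {0..T})"
    proof -
      have "(s2 has_real_derivative (- s2 x * slow_rate r0 \<alpha> lam (s1 x) (s2 x))) (at x within {-1..T+1})"
        using S x1 unfolding slow_solution_def by auto
      thus ?thesis by (rule DERIV_subset) auto
    qed
    have dt: "(t2 has_real_derivative (- t2 x * slow_rate r0 \<alpha> lam (t1 x) (t2 x))) (at x within {0..T})"
      using St x0 unfolding slow_solution_def by auto
    have d: "DERIV (\<lambda>t. t2 t - s2 t) x :> (- t2 x * slow_rate r0 \<alpha> lam (t1 x) (t2 x)) - (- s2 x * slow_rate r0 \<alpha> lam (s1 x) (s2 x))"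
      using DERIV_diff[OF dt ds] unfolding at by simp
    have "\<bar>t1 x - s1 x\<bar> \<le> t2 x - s2 x"
    proof -
      have "\<bar>t1 x - s1 x\<bar> \<le> \<mu> * (t2 x - s2 x)" "t2 x - s2 x > 0" using P x0 by auto
      moreover have "\<mu> * (t2 x - s2 x) \<le> t2 x - s2 x" using calculation(2) assms by (simp add: mult_left_le_one_le)
      ultimately show ?thesis by linarith
    qed
    hence "s2 x * (((s1 x)\<^sup>2 + (s2 x)\<^sup>2) / r0) powr \<alpha> \<le> t2 x * (((t1 x)\<^sup>2 + (t2 x)\<^sup>2) / r0) powr \<alpha>"
      using h_mono assms by blast
    hence "s2 x * (((s1 x)\<^sup>2 + (s2 x)\<^sup>2) / r0) powr \<alpha> * ln lam \<le> t2 x * (((t1 x)\<^sup>2 + (t2 x)\<^sup>2) / r0) powr \<alpha> * ln lam"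
      using lnpos by (intro mult_right_mono) auto
    hence "(- t2 x * slow_rate r0 \<alpha> lam (t1 x) (t2 x)) - (- s2 x * slow_rate r0 \<alpha> lam (s1 x) (s2 x)) \<le> 0"
      unfolding slow_rate_def by (simp add: mult.assoc)
    thus ?thesis using d by blast
  qed
  have "t2 t - s2 t \<le> t2 (T/2) - s2 (T/2)"
    using DERIV_nonpos_imp_nonincreasing[of "T/2" t "\<lambda>t. t2 t - s2 t"] D tt by auto
  moreover have "t2 (T/2) - s2 (T/2) > 0" using P T by auto
  ultimately show "t2 t - s2 t < 2 * (t2 (T/2) - s2 (T/2))" using [[show_types, show_sorts]] by (rule aux)
qed simp

end
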